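(* If $g\in G(V)$ satisfies $(\flat f_{0,V})(\iota(g,\mathrm{id}_V))\neq0$, then $g\in P$.
   Context: Let $\mathbb F$ be a finite field of odd cardinality $q$, $\mathbb E/\mathbb F$ of degree $1$ or $2$ with Galois generator $x\mapsto\bar x$; $\mathcal C$ algebraically closed of characteristic not dividing $q$. $(V,\langle\cdot,\cdot\rangle_V)$ is an $\epsilon$-sesquilinear space over $\mathbb E$ (nondegenerate or zero form; $\epsilon_V=1$ if $\mathbb E\ne\mathbb F$), $G(V)$ its isometry group. $V^\square=V^+\oplus V^-$ with $\langle v_1^++w_1^-,v_2^++w_2^-\rangle=\langle v_1,v_2\rangle-\langle w_1,w_2\rangle$; $V^\Delta=\{v^++v^-\}$; $\iota(g_1,g_2)(v^++w^-)=(g_1v)^++(g_2w)^-$; $P_V$ the stabilizer of $V^\Delta$. For $\chi:\mathbb E^\times\to\mathcal C^\times$, $\chi^{-c}(x)=\chi(\bar x)^{-1}$; $I_V(\chi)$ is the space of $f$ on $G(V^\square)$ with $f(pg)=\chi(\det(p|_{V^\Delta}))f(g)$ ($p\in P_V$, nondegenerate case), resp. $f(pg)=\chi(\det(p|_{V^\Delta}))\chi^{-c}(\det(p|_{V^\square/V^\Delta}))f(g)$ (zero-form case); $f_{0,V}$ is the element of $I_V(\chi)$ supported on $P_V$ with $f_{0,V}(\mathrm{id})=1$; $I_X(\chi),I_{V_0}(\chi)$ are defined likewise. Parabolic setup: nondegenerate case $V=X\oplus V_0\oplus Y$ ($X,Y$ totally isotropic in duality, $V_0=(X\oplus Y)^\perp$),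 $P\subset G(V)$ the stabilizer of $0\subset X\subset X\oplus V_0\subset V$ with unipotent radical $N$, $P^\square_X\subset G(V^\square)$ the stabilizer of $0\subset X^\square\subset X^\square\oplus V_0^\square\subset V^\square$ with Levi $L^\square_X$ (stabilizer of $X^\square,V_0^\square,Y^\square$); zero-form case $V=X\oplus V_0$, $P$ the stabilizer of $X$, $P^\square_X$ the stabilizer of $X^\square$ with Levi the stabilizer of $X^\square$ and $V_0^\square$. $\flat f$ is defined by $(\flat f)(g)(l)=\sum_{(u_1,u_2)\in N^\Delta\backslash(N\times N)}f(\iota(u_1,u_2)lg)$ for $g\in G(V^\square)$, $l\in L^\square_X$, with $N^\Delta=\{(u,u)\}$; "$(\flat f)(g)\neq0$" means this function of $l$ is not identically zero. *)

theory Defs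
  imports "HOL-Analysis.Analysis" "HOL-Computational_Algebra.Polynomial"
begin

text \<open>E is a finite field type 'e; the Galois generator of E/F is an
 involutive field automorphism sigma of E with fixed field F.  V = 'e^'n (coordinates in a
 basis), endomorphisms of V are matrices 'e^'n^'n acting by (*v).
 V-square = V^+ (+) V^- is 'e^('n+'n), with Inl-coordinates = V^+ and Inr-coordinates = V^-.\<close>

definition galois_inv :: "('e::field \<Rightarrow> 'e) \<Rightarrow> bool" where
  "galois_inv \<sigma> \<longleftrightarrow> (\<forall>x y. \<sigma> (x + y) = \<sigma> x + \<sigma> y) \<and> (\<forall>x y. \<sigma> (x * y) = \<sigma> x * \<sigma> y)
     \<and> \<sigma> 1 = 1 \<and> (\<forall>x. \<sigma> (\<sigma> x) = x)"

definition fixed_field :: "('e \<Rightarrow> 'e) \<Rightarrow> 'e set" where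
  "fixed_field \<sigma> = {x. \<sigma> x = x}"

definition eps_sesq_form ::
  "('e::field \<Rightarrow> 'e) \<Rightarrow> 'e \<Rightarrow> ('e^'n::finite \<Rightarrow> 'e^'n \<Rightarrow> 'e) \<Rightarrow> bool" where
  "eps_sesq_form \<sigma> \<epsilon> B \<longleftrightarrow>
     (\<forall>x y z. B (x + y) z = B x z + B y z) \<and> (\<forall>a x z. B (a *s x) z = a * B x z) \<and>
     (\<forall>x y z. B z (x + y) = B z x + B z y) \<and> (\<forall>a x z. B z (a *s x) = \<sigma> a * B z x) \<and>
     (\<forall>v w. B w v = \<epsilon> * \<sigma> (B v w)) \<and> (\<epsilon> = 1 \<or> \<epsilon> = -1) \<and>
     ((\<exists>x. \<sigma> x \<noteq> x) \<longrightarrow> \<epsilon> = 1)"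

definition nondegenerate :: "('e::field^'n::finite \<Rightarrow> 'e^'n \<Rightarrow> 'e) \<Rightarrow> bool" where
  "nondegenerate B \<longleftrightarrow> (\<forall>v. (\<forall>w. B v w = 0) \<longrightarrow> v = 0)"

definition zero_form :: "('e::field^'n::finite \<Rightarrow> 'e^'n \<Rightarrow> 'e) \<Rightarrow> bool" where
  "zero_form B \<longleftrightarrow> (\<forall>v w. B v w = 0)"

definition isom_group :: "('e::field^'n::finite \<Rightarrow> 'e^'n \<Rightarrow> 'e) \<Rightarrow> ('e^'n^'n) set" where
  "isom_group B = {A. invertible A \<and> (\<forall>v w. B (A *v v) (A *v w) = B v w)}"

definition matimg :: "'e::field^'n^'n::finite \<Rightarrow> ('e^'n) set \<Rightarrow> ('e^'n) set" where
  "matimg A S = (\<lambda>v. A *v v) ` S"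

definition setsum :: "('e::field^'n::finite) set \<Rightarrow> ('e^'n) set \<Rightarrow> ('e^'n) set" where
  "setsum S T = {s + t | s t. s \<in> S \<and> t \<in> T}"

definition pl :: "'e^('n::finite + 'n) \<Rightarrow> 'e^'n" where "pl x = (\<chi> i. x $ Inl i)"
definition mi :: "'e^('n::finite + 'n) \<Rightarrow> 'e^'n" where "mi x = (\<chi> i. x $ Inr i)"
definition pm :: "'e^'n::finite \<Rightarrow> 'e^'n \<Rightarrow> 'e^('n + 'n)" where
  "pm v w = (\<chi> k. case k of Inl i \<Rightarrow> v $ i | Inr i \<Rightarrow> w $ i)"  \<comment> \<open>v^+ + w^-\<close>

definition sq_form :: "('e::field^'n::finite \<Rightarrow> 'e^'n \<Rightarrow> 'e) \<Rightarrow> 'e^('n+'n) \<Rightarrow> 'e^('n+'n) \<Rightarrow> 'e" where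
  "sq_form B x y = B (pl x) (pl y) - B (mi x) (mi y)"

definition Vdelta :: "('e::field^('n::finite+'n)) set" where
  "Vdelta = {x. pl x = mi x}"

definition sq_sub :: "('e::field^'n::finite) set \<Rightarrow> ('e^('n+'n)) set" where
  "sq_sub S = {x. pl x \<in> S \<and> mi x \<in> S}"   \<comment> \<open>S^square = S^+ (+) S^-\<close>

definition iota :: "'e::field^'n^'n::finite \<Rightarrow> 'e^'n^'n \<Rightarrow> 'e^('n+'n)^('n+'n)" where
  "iota g1 g2 = (\<chi> k l. case (k, l) of (Inl a, Inl b) \<Rightarrow> g1 $ a $ b
                         | (Inr a, Inr b) \<Rightarrow> g2 $ a $ b | _ \<Rightarrow> 0)"

definition P_V :: "('e::field^'n::finite \<Rightarrow> 'e^'n \<Rightarrow> 'e) \<Rightarrow> ('e^('n+'n)^('n+'n)) set" where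
  "P_V B = {p \<in> isom_group (sq_form B). matimg p Vdelta = Vdelta}"

text \<open>det(p|V^Delta), computed in the basis e_j^+ + e_j^- of V^Delta.\<close>
definition det_delta :: "'e::field^('n::finite+'n)^('n+'n) \<Rightarrow> 'e" where
  "det_delta p = det (\<chi> i j. pl (p *v pm (axis j 1) (axis j 1)) $ i)"

text \<open>det(p|V^square/V^Delta), via V^square/V^Delta = V, [v^+ + w^-] -> v - w.\<close>
definition det_quot :: "'e::field^('n::finite+'n)^('n+'n) \<Rightarrow> 'e" where
  "det_quot p = det (\<chi> i j. (pl (p *v pm (axis j 1) 0) - mi (p *v pm (axis j 1) 0)) $ i)"

text \<open>f_{0,V}: the element of I_V(chi) supported on P_V with value 1 at the identity.\<close>
definition f0 :: "('e::field \<Rightarrow> 'e) \<Rightarrow> ('e \<Rightarrow> 'c::field) \<Rightarrow> ('e^'n::finite \<Rightarrow> 'e^'n \<Rightarrow> 'e)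
                  \<Rightarrow> 'e^('n+'n)^('n+'n) \<Rightarrow> 'c" where
  "f0 \<sigma> chr B h =
     (if h \<in> P_V B then
        (if zero_form B then chr (det_delta h) * inverse (chr (\<sigma> (det_quot h)))
         else chr (det_delta h))
      else 0)"

definition is_character :: "('e::field \<Rightarrow> 'c::field) \<Rightarrow> bool" where
  "is_character chr \<longleftrightarrow> (\<forall>x. x \<noteq> 0 \<longrightarrow> chr x \<noteq> 0) \<and>
      (\<forall>x y. x \<noteq> 0 \<longrightarrow> y \<noteq> 0 \<longrightarrow> chr (x * y) = chr x * chr y)"

definition nd_parabolic :: "('e::field^'n::finite \<Rightarrow> 'e^'n \<Rightarrow> 'e) \<Rightarrow> ('e^'n) set \<Rightarrow> ('e^'n) set \<Rightarrow> bool" where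
  "nd_parabolic B X Y \<longleftrightarrow> vec.subspace X \<and> vec.subspace Y \<and>
     (\<forall>x\<in>X. \<forall>x'\<in>X. B x x' = 0) \<and> (\<forall>y\<in>Y. \<forall>y'\<in>Y. B y y' = 0) \<and>
     (\<forall>x\<in>X. (\<forall>y\<in>Y. B x y = 0) \<longrightarrow> x = 0) \<and> (\<forall>y\<in>Y. (\<forall>x\<in>X. B y x = 0) \<longrightarrow> y = 0)"

definition orth :: "('e::field^'n::finite \<Rightarrow> 'e^'n \<Rightarrow> 'e) \<Rightarrow> ('e^'n) set \<Rightarrow> ('e^'n) set" where
  "orth B S = {v. \<forall>w\<in>S. B v w = 0}"

definition P_nd where
  "P_nd B X V0 = {g \<in> isom_group B. matimg g X = X \<and> matimg g (setsum X V0) = setsum X V0}"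

text \<open>Unipotent radical of the flag stabilizer: elements of P acting trivially on the
 graded pieces X, (X+V0)/X, V/(X+V0).\<close>
definition N_nd where
  "N_nd B X V0 = {g \<in> P_nd B X V0. (\<forall>x\<in>X. g *v x = x) \<and>
       (\<forall>v\<in>setsum X V0. g *v v - v \<in> X) \<and> (\<forall>v. g *v v - v \<in> setsum X V0)}"

definition L_nd where
  "L_nd B X V0 Y = {h \<in> isom_group (sq_form B). matimg h (sq_sub X) = sq_sub X \<and>
       matimg h (sq_sub V0) = sq_sub V0 \<and> matimg h (sq_sub Y) = sq_sub Y}"

definition z_parabolic :: "('e::field^'n::finite) set \<Rightarrow> ('e^'n) set \<Rightarrow> bool" where
  "z_parabolic X V0 \<longleftrightarrow> vec.subspace X \<and> vec.subspace V0 \<and> X \<inter> V0 = {0} \<and> setsum X V0 = UNIV"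

definition P_z where
  "P_z B X = {g \<in> isom_group B. matimg g X = X}"

definition N_z where
  "N_z B X = {g \<in> P_z B X. (\<forall>x\<in>X. g *v x = x) \<and> (\<forall>v. g *v v - v \<in> X)}"

definition L_z where
  "L_z B X V0 = {h \<in> isom_group (sq_form B). matimg h (sq_sub X) = sq_sub X \<and>
       matimg h (sq_sub V0) = sq_sub V0}"

definition diag_cosets :: "('e::field^'n::finite^'n) set \<Rightarrow> (('e^'n^'n) \<times> ('e^'n^'n)) set set" where
  "diag_cosets N = {(\<lambda>u. (u ** u1, u ** u2)) ` N | u1 u2. u1 \<in> N \<and> u2 \<in> N}"
  \<comment> \<open>N^Delta \ (N x N)\<close>

definition flat ::
  "('e::field^('n::finite+'n)^('n+'n) \<Rightarrow> 'c::field) \<Rightarrow> ('e^'n^'n) set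
     \<Rightarrow> 'e^('n+'n)^('n+'n) \<Rightarrow> 'e^('n+'n)^('n+'n) \<Rightarrow> 'c" where
  "flat f N g l = (\<Sum>c\<in>diag_cosets N.
      let r = (SOME r. r \<in> c) in f (iota (fst r) (snd r) ** l ** g))"

end

theory Submission
  imports Defs
begin

lemma sum_UNIV_Plus: "sum f (UNIV::('a::finite+'b::finite) set) = sum (\<lambda>j. f (Inl j)) UNIV + sum (\<lambda>j. f (Inr j)) UNIV"
  using sum.Plus[of "UNIV::'a set" "UNIV::'b set" f] by (simp add: o_def)

lemma pl_iota: "pl (iota a b *v x) = a *v pl x"
  unfolding pl_def iota_def
  by (simp add: vec_eq_iff matrix_vector_mult_def sum_UNIV_Plus)
  
lemma mi_iota: "mi (iota a b *v x) = b *v mi x"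
  unfolding mi_def iota_def
  by (simp add: vec_eq_iff matrix_vector_mult_def sum_UNIV_Plus)

lemma pl_pm[simp]: "pl (pm v w) = v" and mi_pm[simp]: "mi (pm v w) = w"
  by (simp_all add: pl_def mi_def pm_def vec_eq_iff)

lemma pl_add: "pl (x + y) = pl x + pl y" and mi_add: "mi (x + y) = mi x + mi y"
  by (simp_all add: pl_def mi_def vec_eq_iff)

lemma pm_plmi: "pm (pl x) (mi x) = x"
  by (simp add: pl_def mi_def pm_def vec_eq_iff split: sum.split)

lemma inv_inj: "invertible (A::'a::field^'n^'n) \<Longrightarrow> A *v x = A *v y \<Longrightarrow> x = y"
  unfolding invertible_def
  by (metis matrix_vector_mul_assoc matrix_vector_mul_lid)

lemma pres_of_matimg: "invertible (l::'a::field^'n^'n) \<Longrightarrow> matimg l Q = Q \<Longrightarrow> (l *v x \<in> Q) = (x \<in> Q)"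
  unfolding matimg_def by (metis image_iff inv_inj)

lemma pm_add: "pm a b + pm c d = pm (a + c) (b + d)"
  by (simp add: pm_def vec_eq_iff split: sum.split)

lemma sq_sub_setsum: "sq_sub (setsum X V0) = {p + q | p q. p \<in> sq_sub X \<and> q \<in> sq_sub V0}"
proof
  show "sq_sub (setsum X V0) \<subseteq> {p + q | p q. p \<in> sq_sub X \<and> q \<in> sq_sub V0}"
  proof
    fix x assume "x \<in> sq_sub (setsum X V0)"
    then obtain x1 y1 x2 y2 where h: "pl x = x1 + y1" "mi x = x2 + y2" "x1 \<in> X" "x2 \<in> X" "y1 \<in> V0" "y2 \<in> V0"
      unfolding sq_sub_def setsum_def by blast
    have "x = pm x1 x2 + pm y1 y2" using h(1,2) pm_plmi[of x] by (simp add: pm_add)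
    moreover have "pm x1 x2 \<in> sq_sub X" "pm y1 y2 \<in> sq_sub V0" using h by (simp_all add: sq_sub_def)
    ultimately show "x \<in> {p + q | p q. p \<in> sq_sub X \<and> q \<in> sq_sub V0}" by blast
  qed
  show "{p + q | p q. p \<in> sq_sub X \<and> q \<in> sq_sub V0} \<subseteq> sq_sub (setsum X V0)"
    unfolding sq_sub_def setsum_def by (auto simp: pl_add mi_add; blast)
qed

lemma matimg_sum: assumes "matimg l Q1 = Q1" "matimg l Q2 = Q2"
  shows "matimg l {p + q | p q. p \<in> Q1 \<and> q \<in> Q2} = {p + q | p q. p \<in> Q1 \<and> q \<in> Q2}"
proof
  note a = assms
  show "matimg l {p + q | p q. p \<in> Q1 \<and> q \<in> Q2} \<subseteq> {p + q | p q. p \<in> Q1 \<and> q \<in> Q2}"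
  proof
    fix y assume "y \<in> matimg l {p + q | p q. p \<in> Q1 \<and> q \<in> Q2}"
    then obtain p q where "p \<in> Q1" "q \<in> Q2" "y = l *v p + l *v q"
      unfolding matimg_def by (auto simp: matrix_vector_right_distrib)
    moreover have "l *v p \<in> Q1" "l *v q \<in> Q2" using a calculation unfolding matimg_def by blast+
    ultimately show "y \<in> {p + q | p q. p \<in> Q1 \<and> q \<in> Q2}" by blast
  qed
  show "{p + q | p q. p \<in> Q1 \<and> q \<in> Q2} \<subseteq> matimg l {p + q | p q. p \<in> Q1 \<and> q \<in> Q2}"
  proof
    fix y assume "y \<in> {p + q | p q. p \<in> Q1 \<and> q \<in> Q2}"
    then obtain p q where pq: "p \<in> Q1" "q \<in> Q2" "y = p + q" by blast
    obtain p' q' where "p' \<in> Q1" "q' \<in> Q2" "p = l *v p'" "q = l *v q'"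
      using a pq unfolding matimg_def by blast
    hence "y = l *v (p' + q')" "p' + q' \<in> {p + q | p q. p \<in> Q1 \<and> q \<in> Q2}"
      using pq by (auto simp: matrix_vector_right_distrib)
    thus "y \<in> matimg l {p + q | p q. p \<in> Q1 \<and> q \<in> Q2}" unfolding matimg_def by blast
  qed
qed

lemma key:
  fixes g a b :: "'e::{field,finite}^'n::finite^'n" and l :: "'e^('n+'n)^('n+'n)"
    and S :: "('e^'n) set"
  assumes lpres: "\<And>x. (l *v x \<in> sq_sub S) = (x \<in> sq_sub S)"
    and apres: "\<And>y. (a *v y \<in> S) = (y \<in> S)"
    and bpres: "\<And>y. (b *v y \<in> S) = (y \<in> S)"
    and hD: "matimg (iota a b ** l ** iota g (mat 1)) Vdelta = Vdelta"
    and v: "v \<in> S"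
  shows "g *v v \<in> S"
proof -
  let ?G = "iota g (mat 1)" let ?h = "iota a b ** l ** ?G"
  define T1 where "T1 = {w \<in> Vdelta. ?G *v w \<in> sq_sub S}"
  define T2 where "T2 = {w \<in> Vdelta. ?h *v w \<in> sq_sub S}"
  have hv: "?h *v w = iota a b *v (l *v (?G *v w))" for w by (simp add: matrix_mul_assoc matrix_vector_mul_assoc[symmetric])
  have sqa: "(iota a b *v x \<in> sq_sub S) = (x \<in> sq_sub S)" for x
    by (simp add: sq_sub_def pl_iota mi_iota apres bpres)
  have T12: "T1 = T2" unfolding T1_def T2_def using hv sqa lpres by simp
  have sub: "T1 \<subseteq> Vdelta \<inter> sq_sub S" unfolding T1_def
    by (auto simp: Vdelta_def sq_sub_def pl_iota mi_iota)
  have surj: "Vdelta \<inter> sq_sub S \<subseteq> (\<lambda>w. ?h *v w) ` T2"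
  proof
    fix y assume y: "y \<in> Vdelta \<inter> sq_sub S"
    then obtain w where "w \<in> Vdelta" "y = ?h *v w" using hD unfolding matimg_def by blast
    thus "y \<in> (\<lambda>w. ?h *v w) ` T2" using y unfolding T2_def by auto
  qed
  have "card (Vdelta \<inter> sq_sub S) \<le> card T1"
    using card_mono[OF _ surj] card_image_le[of T2 "\<lambda>w. ?h *v w"] T12 by simp
  hence eq: "T1 = Vdelta \<inter> sq_sub S" using card_seteq[OF _ sub] by simp
  have "pm v v \<in> Vdelta \<inter> sq_sub S" by (simp add: Vdelta_def sq_sub_def v)
  then have "pm v v \<in> T1" using eq by simp
  thus ?thesis by (simp add: T1_def sq_sub_def pl_iota)
qed

lemma key2:
  fixes g u u1 u2 :: "'e::{field,finite}^'n::finite^'n" and l :: "'e^('n+'n)^('n+'n)"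
    and S :: "('e^'n) set"
  assumes "invertible u" "invertible u1" "invertible u2"
    "matimg u S = S" "matimg u1 S = S" "matimg u2 S = S"
    "invertible l" "matimg l (sq_sub S) = sq_sub S"
    "invertible g"
    "matimg (iota (u ** u1) (u ** u2) ** l ** iota g (mat 1)) Vdelta = Vdelta"
  shows "matimg g S = S"
proof -
  have "g *v v \<in> S" if "v \<in> S" for v
    apply (rule key[OF _ _ _ assms(10) that])
    using assms by (simp_all add: pres_of_matimg matrix_vector_mul_assoc[symmetric])
  hence sub: "matimg g S \<subseteq> S" unfolding matimg_def by auto
  have "inj_on (\<lambda>v. g *v v) S" using inv_inj[OF assms(9)] by (auto simp: inj_on_def)
  hence "card (matimg g S) = card S" unfolding matimg_def by (simp add: card_image)
  thus ?thesis using card_seteq[OF _ sub] by simp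
qed

theorem mainTheorem10:
  fixes \<sigma> :: "'e::{field,finite} \<Rightarrow> 'e"
    and \<epsilon> :: 'e
    and B :: "'e^'n \<Rightarrow> 'e^'n \<Rightarrow> 'e"
    and chr :: "'e \<Rightarrow> 'c::alg_closed_field"
    and X Y V0 :: "('e^'n) set"
    and P N :: "('e^'n^'n) set"
    and L :: "('e^('n+'n)^('n+'n)) set"
    and g :: "'e^'n^'n"
  assumes "galois_inv \<sigma>"
    and "odd (card (fixed_field \<sigma>))"
    and "\<not> CHAR('c) dvd card (fixed_field \<sigma>)"
    and "eps_sesq_form \<sigma> \<epsilon> B"
    and "is_character chr"
    and "(nondegenerate B \<and> nd_parabolic B X Y \<and> V0 = orth B (setsum X Y) \<and>
          P = P_nd B X V0 \<and> N = N_nd B X V0 \<and> L = L_nd B X V0 Y)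
       \<or> (zero_form B \<and> z_parabolic X V0 \<and>
          P = P_z B X \<and> N = N_z B X \<and> L = L_z B X V0)"
    and "g \<in> isom_group B"
    and "\<exists>l\<in>L. flat (f0 \<sigma> chr B) N (iota g (mat 1)) l \<noteq> 0"
  shows "g \<in> P"
proof -
  note A = assms
  obtain l where lL: "l \<in> L" and fl: "flat (f0 \<sigma> chr B) N (iota g (mat 1)) l \<noteq> 0" using A(8) by blast
  obtain c where cD: "c \<in> diag_cosets N"
    and ct: "(let r = (SOME r. r \<in> c) in f0 \<sigma> chr B (iota (fst r) (snd r) ** l ** iota g (mat 1))) \<noteq> 0"
    using fl unfolding flat_def by (meson sum.not_neutral_contains_not_neutral)
  obtain u1 u2 where c: "c = (\<lambda>u. (u ** u1, u ** u2)) ` N" "u1 \<in> N" "u2 \<in> N"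
    using cD unfolding diag_cosets_def by blast
  have "c \<noteq> {}" using c by blast
  hence "(SOME r. r \<in> c) \<in> c" by (meson ex_in_conv someI_ex)
  then obtain u where u: "u \<in> N" "(SOME r. r \<in> c) = (u ** u1, u ** u2)" using c by blast
  let ?h = "iota (u ** u1) (u ** u2) ** l ** iota g (mat 1)"
  have "f0 \<sigma> chr B ?h \<noteq> 0" using ct u by (simp add: Let_def)
  hence "?h \<in> P_V B" unfolding f0_def by (meson)
  hence hD: "matimg ?h Vdelta = Vdelta" unfolding P_V_def by blast
  have ginv: "invertible g" using A(7) unfolding isom_group_def by blast
  show ?thesis
  proof (cases "nondegenerate B \<and> nd_parabolic B X Y \<and> V0 = orth B (setsum X Y) \<and>
          P = P_nd B X V0 \<and> N = N_nd B X V0 \<and> L = L_nd B X V0 Y")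
    case True
    have Nx: "invertible n \<and> matimg n X = X \<and> matimg n (setsum X V0) = setsum X V0" if "n \<in> N" for n
      using that True unfolding N_nd_def P_nd_def isom_group_def by blast
    have Lx: "invertible l" "matimg l (sq_sub X) = sq_sub X" "matimg l (sq_sub V0) = sq_sub V0"
      using lL True unfolding L_nd_def isom_group_def by blast+
    have Ls: "matimg l (sq_sub (setsum X V0)) = sq_sub (setsum X V0)"
      unfolding sq_sub_setsum using matimg_sum[OF Lx(2,3)] .
    have "matimg g X = X"
      using key2[OF _ _ _ _ _ _ Lx(1,2) ginv hD] Nx u(1) c(2,3) by blast
    moreover have "matimg g (setsum X V0) = setsum X V0"
      using key2[OF _ _ _ _ _ _ Lx(1) Ls ginv hD] Nx u(1) c(2,3) by blast
    ultimately show ?thesis using True A(7) unfolding P_nd_def by blast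
  next
    case False
    hence F: "zero_form B \<and> z_parabolic X V0 \<and> P = P_z B X \<and> N = N_z B X \<and> L = L_z B X V0"
      using A(6) by blast
    have Nx: "invertible n \<and> matimg n X = X" if "n \<in> N" for n
      using that F unfolding N_z_def P_z_def isom_group_def by blast
    have Lx: "invertible l" "matimg l (sq_sub X) = sq_sub X"
      using lL F unfolding L_z_def isom_group_def by blast+
    have "matimg g X = X"
      using key2[OF _ _ _ _ _ _ Lx(1,2) ginv hD] Nx u(1) c(2,3) by blast
    thus ?thesis using F A(7) unfolding P_z_def by blast
  qed
qed

end
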